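(* For integers $n\geq 1$ and $r\geq 1$, \[ \sum_{k=0}^n {n \brace k}_r(-1)^{k+r-1}D_{k+r-1}=B_{n-1,r}. \]
   Context: $D_n$ is the $n$-th derangement number. For $r\geq0$, ${n \brace k}_r$ is the $r$-Stirling number of the second kind: the number of partitions of $\{1,\dots,n+r\}$ into $k+r$ nonempty blocks with $1,\dots,r$ in distinct blocks. $B_{n,r}$ is the $r$-Bell number, defined by $\sum_{n\geq0}B_{n,r}\frac{t^n}{n!}=e^{e^t-1+rt}$ (equivalently $B_{n,r}=\sum_k{n\brace k}_r$). *)

theory Defs
  imports "HOL-Combinatorics.Permutations" "HOL-Library.Disjoint_Sets"
begin

definition derangement :: "nat \<Rightarrow> nat" where
  "derangement n = card {p. p permutes {1..n} \<and> (\<forall>x\<in>{1..n}. p x \<noteq> x)}"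

definition r_stirling :: "nat \<Rightarrow> nat \<Rightarrow> nat \<Rightarrow> nat" where
  "r_stirling r n k = card {P. partition_on {1..n+r} P \<and> card P = k + r \<and>
      (\<forall>B\<in>P. \<forall>i\<in>{1..r}. \<forall>j\<in>{1..r}. i \<in> B \<and> j \<in> B \<longrightarrow> i = j)}"

definition r_bell :: "nat \<Rightarrow> nat \<Rightarrow> nat" where
  "r_bell n r = (\<Sum>k\<le>n. r_stirling r n k)"

end

theory Submission
  imports Defs
begin


definition der :: "'a set \<Rightarrow> ('a \<Rightarrow> 'a) set" where
  "der A = {p. p permutes A \<and> (\<forall>x\<in>A. p x \<noteq> x)}"

lemma card_der: "finite A \<Longrightarrow> card (der A) = derangement (card A)"
proof -
  assume fA: "finite A"
  obtain f where f: "bij_betw f A {1..card A}"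
    using finite_same_card_bij[OF fA, of "{1..card A}"] by auto
  have "bij_betw (\<lambda>\<pi> x. if x \<in> {1..card A} then f (\<pi> (inv_into A f x)) else x) (der A)
     {\<pi>. \<pi> permutes {1..card A} \<and> (\<forall>x\<in>{1..card A}. \<pi> x \<noteq> x)}"
    unfolding der_def by (rule bij_betw_derangements[OF f])
  then show ?thesis unfolding derangement_def by (simp add: bij_betw_same_card)
qed

lemma finite_der: "finite A \<Longrightarrow> finite (der A)"
  unfolding der_def by (rule finite_subset[OF _ finite_permutations]) auto

lemma der_nonfixed: "p \<in> der G \<Longrightarrow> {x. p x \<noteq> x} = G"
  unfolding der_def using permutes_not_in by fastforce

lemma perms_Union: "{p. p permutes A} = (\<Union>G\<in>Pow A. der G)"
proof
  show "{p. p permutes A} \<subseteq> (\<Union>G\<in>Pow A. der G)"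
  proof
    fix p assume "p \<in> {p. p permutes A}"
    then have p: "p permutes A" by simp
    let ?G = "{x. p x \<noteq> x}"
    have "?G \<subseteq> A" using p permutes_not_in by fastforce
    moreover have "p permutes ?G"
      using p unfolding permutes_def by auto
    ultimately show "p \<in> (\<Union>G\<in>Pow A. der G)" unfolding der_def by auto
  qed
next
  show "(\<Union>G\<in>Pow A. der G) \<subseteq> {p. p permutes A}"
    unfolding der_def using permutes_subset by blast
qed

lemma fact_sum_der: "finite A \<Longrightarrow> fact (card A) = (\<Sum>G\<in>Pow A. card (der G))"
proof -
  assume fA: "finite A"
  have "fact (card A) = card {p. p permutes A}" using card_permutations[OF refl fA] by simp
  also have "\<dots> = card (\<Union>G\<in>Pow A. der G)" by (simp add: perms_Union)
  also have "\<dots> = (\<Sum>G\<in>Pow A. card (der G))"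
  proof (rule card_UN_disjoint)
    show "finite (Pow A)" using fA by simp
    show "\<forall>i\<in>Pow A. finite (der i)" using fA finite_der finite_subset by blast
    show "\<forall>i\<in>Pow A. \<forall>j\<in>Pow A. i \<noteq> j \<longrightarrow> der i \<inter> der j = {}"
      using der_nonfixed by blast
  qed
  finally show ?thesis .
qed

lemma sum_Pow_card: "finite A \<Longrightarrow> (\<Sum>G\<in>Pow A. h (card G)) = (\<Sum>k\<le>card A. (card A choose k) * h k)"
proof -
  assume fA: "finite A"
  have "(\<Sum>G\<in>Pow A. h (card G)) = (\<Sum>k\<le>card A. \<Sum>G\<in>{G. G \<in> Pow A \<and> card G = k}. h (card G))"
    by (rule sum.group[symmetric]) (use fA card_mono in auto)
  also have "\<dots> = (\<Sum>k\<le>card A. (card A choose k) * h k)"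
  proof (rule sum.cong[OF refl])
    fix k
    have "(\<Sum>G\<in>{G. G \<in> Pow A \<and> card G = k}. h (card G)) = (\<Sum>G\<in>{G. G \<in> Pow A \<and> card G = k}. h k)"
      by simp
    also have "\<dots> = card {G. G \<subseteq> A \<and> card G = k} * h k" by simp
    finally show "(\<Sum>G\<in>{G. G \<in> Pow A \<and> card G = k}. h (card G)) = (card A choose k) * h k"
      using n_subsets[OF fA] by simp
  qed
  finally show ?thesis .
qed

lemma fact_binom_der: "fact n = (\<Sum>k\<le>n. (n choose k) * derangement k)"
proof -
  have "fact n = fact (card {1..n})" by simp
  also have "\<dots> = (\<Sum>G\<in>Pow {1..n}. derangement (card G))"
    using fact_sum_der[of "{1..n}"] card_der finite_subset
    by (metis (no_types, lifting) PowD finite_atLeastAtMost sum.cong)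
  also have "\<dots> = (\<Sum>k\<le>n. (n choose k) * derangement k)"
    using sum_Pow_card[of "{1..n}" derangement] by simp
  finally show ?thesis .
qed

definition cc :: "nat \<Rightarrow> int" where
  "cc k = int (derangement k) - int k * int (derangement (k - 1))"

lemma cc_sum: "n \<ge> 1 \<Longrightarrow> (\<Sum>k\<le>n. int (n choose k) * cc k) = 0"
proof -
  assume "n \<ge> 1"
  then obtain m where n: "n = Suc m" by (cases n) auto
  have A: "(\<Sum>k\<le>n. int (n choose k) * int (derangement k)) = fact n"
    using fact_binom_der[of n] by (metis (mono_tags, lifting) of_nat_fact of_nat_mult of_nat_sum sum.cong)
  have B0: "(\<Sum>k\<le>m. int (m choose k) * int (derangement k)) = fact m"
    using fact_binom_der[of m] by (metis (mono_tags, lifting) of_nat_fact of_nat_mult of_nat_sum sum.cong)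
  have "(\<Sum>k\<le>n. int (n choose k) * (int k * int (derangement (k - 1))))
      = (\<Sum>i\<le>m. int (Suc m choose Suc i) * (int (Suc i) * int (derangement i)))"
    unfolding n by (subst sum.atMost_Suc_shift) simp
  also have "\<dots> = (\<Sum>i\<le>m. int (Suc m) * (int (m choose i) * int (derangement i)))"
  proof (rule sum.cong[OF refl])
    fix i
    have "int (Suc m choose Suc i) * int (Suc i) = int (Suc m) * int (m choose i)"
      using Suc_times_binomial_eq[of m i] by (metis of_nat_mult)
    then show "int (Suc m choose Suc i) * (int (Suc i) * int (derangement i))
       = int (Suc m) * (int (m choose i) * int (derangement i))"
      by (metis mult.assoc)
  qed
  also have "\<dots> = int (Suc m) * fact m" using B0 by (simp add: sum_distrib_left[symmetric])
  also have "\<dots> = fact n" unfolding n by simp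
  finally have B: "(\<Sum>k\<le>n. int (n choose k) * (int k * int (derangement (k - 1)))) = fact n" .
  show ?thesis unfolding cc_def using A B
    by (simp add: right_diff_distrib sum_subtractf)
qed

lemma cc_eq: "cc n = (-1) ^ n"
proof (induction n rule: less_induct)
  case (less n)
  show ?case
  proof (cases "n = 0")
    case True
    then show ?thesis by (simp add: cc_def derangement_def)
  next
    case False
    have "0 = (\<Sum>k\<le>n. int (n choose k) * cc k)" using cc_sum False by simp
    also have "\<dots> = (\<Sum>k<n. int (n choose k) * cc k) + cc n"
      by (simp add: lessThan_Suc_atMost[symmetric])
    also have "(\<Sum>k<n. int (n choose k) * cc k) = (\<Sum>k<n. (-1)^k * int (n choose k))"
      using less by (simp add: mult.commute)
    finally have 1: "cc n = - (\<Sum>k<n. (-1)^k * int (n choose k))" by simp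
    have "0 = (\<Sum>k\<le>n. (-1)^k * int (n choose k))" using choose_alternating_sum[of n] False by simp
    also have "\<dots> = (\<Sum>k<n. (-1)^k * int (n choose k)) + (-1)^n"
      by (simp add: lessThan_Suc_atMost[symmetric])
    finally show ?thesis using 1 by simp
  qed
qed

lemma der_rec: "int (derangement (Suc m)) = int (Suc m) * int (derangement m) + (-1) ^ Suc m"
  using cc_eq[of "Suc m"] unfolding cc_def by simp



definition Part :: "'a set \<Rightarrow> 'a set \<Rightarrow> nat \<Rightarrow> 'a set set set" where
  "Part A R j = {P. partition_on A P \<and> card P = j \<and>
      (\<forall>B\<in>P. \<forall>i\<in>R. \<forall>j\<in>R. i \<in> B \<and> j \<in> B \<longrightarrow> i = j)}"

lemma pblock_eq: "partition_on A P \<Longrightarrow> B \<in> P \<Longrightarrow> C \<in> P \<Longrightarrow> x \<in> B \<Longrightarrow> x \<in> C \<Longrightarrow> B = C"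
  unfolding partition_on_def disjoint_def by blast

lemma finite_Part: "finite A \<Longrightarrow> finite (Part A R j)"
  unfolding Part_def by (rule finite_subset[OF _ finitely_many_partition_on[of A]]) auto

lemma card_Part_le: "finite A \<Longrightarrow> partition_on A P \<Longrightarrow> card P \<le> card A"
proof -
  assume fA: "finite A" and P: "partition_on A P"
  have fin: "finite p" if "p \<in> P" for p
  proof -
    have "p \<subseteq> A" using that partition_onD1[OF P] by blast
    then show ?thesis using fA finite_subset by blast
  qed
  have "card P = (\<Sum>p\<in>P. 1)" by simp
  also have "\<dots> \<le> (\<Sum>p\<in>P. card p)"
  proof (rule sum_mono)
    fix p assume "p \<in> P"
    then have "p \<noteq> {}" "finite p" using P partition_onD3 fin by blast+
    then show "1 \<le> card p" by (simp add: Suc_leI card_gt_0_iff)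
  qed
  also have "\<dots> = card A" using product_partition[OF P fin] by simp
  finally show ?thesis .
qed

lemma Part_big: "finite A \<Longrightarrow> card A < j \<Longrightarrow> Part A R j = {}"
  unfolding Part_def using card_Part_le by fastforce

lemma Part_small: 
  assumes "finite A" "R \<subseteq> A" "j < card R"
  shows "Part A R j = {}"
proof (rule ccontr)
  assume "Part A R j \<noteq> {}"
  then obtain P where P: "partition_on A P" "card P = j"
    and sep: "\<forall>B\<in>P. \<forall>i\<in>R. \<forall>j\<in>R. i \<in> B \<and> j \<in> B \<longrightarrow> i = j"
    unfolding Part_def by auto
  define f where "f i = (SOME B. B \<in> P \<and> i \<in> B)" for i
  have f: "f i \<in> P \<and> i \<in> f i" if "i \<in> R" for i
  proof -
    have "\<exists>B. B \<in> P \<and> i \<in> B" using that assms(2) P(1) partition_onD1 by blast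
    then show ?thesis unfolding f_def by (rule someI_ex)
  qed
  have "inj_on f R"
    by (rule inj_onI) (metis f sep)
  moreover have "f ` R \<subseteq> P" using f by auto
  moreover have "finite P" using finite_elements[OF assms(1) P(1)] .
  ultimately have "card R \<le> card P" by (rule card_inj_on_le)
  then show False using P(2) assms(3) by simp
qed

lemma Part_rec:
  assumes fA: "finite A" and aA: "a \<notin> A" and aR: "a \<notin> R"
  shows "card (Part (insert a A) R (Suc j)) = card (Part A R j) + Suc j * card (Part A R (Suc j))"
proof -
  let ?X = "Part (insert a A) R (Suc j)"
  define X1 where "X1 = {P \<in> ?X. {a} \<in> P}"
  define X2 where "X2 = {P \<in> ?X. {a} \<notin> P}"
  have finX: "finite ?X" using fA finite_Part by blast
  have split: "?X = X1 \<union> X2" "X1 \<inter> X2 = {}" unfolding X1_def X2_def by auto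
  have c1: "card X1 = card (Part A R j)"
  proof -
    have "bij_betw (\<lambda>Q. insert {a} Q) (Part A R j) X1"
    proof (rule bij_betw_byWitness[where f' = "\<lambda>P. P - {{a}}"])
      show "\<forall>Q\<in>Part A R j. insert {a} Q - {{a}} = Q"
      proof
        fix Q assume "Q \<in> Part A R j"
        then have "{a} \<notin> Q" unfolding Part_def using aA partition_onD1 by blast
        then show "insert {a} Q - {{a}} = Q" by simp
      qed
      show "\<forall>P\<in>X1. insert {a} (P - {{a}}) = P" unfolding X1_def by auto
      show "(\<lambda>Q. insert {a} Q) ` Part A R j \<subseteq> X1"
      proof
        fix P assume "P \<in> (\<lambda>Q. insert {a} Q) ` Part A R j"
        then obtain Q where Q: "Q \<in> Part A R j" and PQ: "P = insert {a} Q" by auto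
        have Qp: "partition_on A Q" "card Q = j" using Q unfolding Part_def by auto
        have nQ: "{a} \<notin> Q" using Qp(1) aA partition_onD1 by blast
        have "partition_on (insert a A) P" unfolding PQ
          by (subst partition_on_insert) (use Qp(1) aA partition_onD1 in \<open>auto simp: disjnt_def\<close>)
        moreover have "card P = Suc j" unfolding PQ
          using nQ Qp finite_elements[OF fA Qp(1)] by simp
        moreover have "\<forall>B\<in>P. \<forall>i\<in>R. \<forall>j\<in>R. i \<in> B \<and> j \<in> B \<longrightarrow> i = j"
          using Q aR unfolding PQ Part_def by auto
        ultimately show "P \<in> X1" unfolding X1_def Part_def PQ by blast
      qed
      show "(\<lambda>P. P - {{a}}) ` X1 \<subseteq> Part A R j"
      proof
        fix Q assume "Q \<in> (\<lambda>P. P - {{a}}) ` X1"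
        then obtain P where P: "P \<in> X1" and QP: "Q = P - {{a}}" by auto
        have Pp: "partition_on (insert a A) P" "card P = Suc j" "{a} \<in> P"
          and sep: "\<forall>B\<in>P. \<forall>i\<in>R. \<forall>j\<in>R. i \<in> B \<and> j \<in> B \<longrightarrow> i = j"
          using P unfolding X1_def Part_def by auto
        have PQ: "P = insert {a} Q" "{a} \<notin> Q" using QP Pp(3) by auto
        have "disjnt {a} (\<Union>Q)"
        proof -
          have "a \<notin> B" if "B \<in> Q" for B
            using that PQ pblock_eq[OF Pp(1), of "{a}" B a] Pp(3) by auto
          then show ?thesis by (auto simp: disjnt_def)
        qed
        then have "partition_on A Q" using Pp(1) aA unfolding PQ
          by (subst (asm) partition_on_insert) auto
        moreover have "card Q = j" using Pp(2) PQ finite_elements[OF _ Pp(1)] fA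
          by (metis card_insert_disjoint diff_Suc_1 finite_insert finite.insertI infinite_remove)
        ultimately show "Q \<in> Part A R j" using sep QP unfolding Part_def by auto
      qed
    qed
    then show ?thesis by (simp add: bij_betw_same_card)
  qed
  have c2: "card X2 = Suc j * card (Part A R (Suc j))"
  proof -
    let ?Y = "Part A R (Suc j)"
    define F where "F P = ((\<lambda>B. B - {a}) ` P, \<Union>{B\<in>P. a \<in> B} - {a})" for P :: "'a set set"
    define G where "G QB = insert (insert a (snd QB)) (fst QB - {snd QB})" for QB :: "'a set set \<times> 'a set"
    have Pfacts: "G (F P) = P \<and> F P \<in> Sigma ?Y id" if P: "P \<in> X2" for P
    proof -
      have PX: "P \<in> ?X" "{a} \<notin> P" using P unfolding X2_def by simp_all
      have Pp: "partition_on (insert a A) P" "card P = Suc j" "{a} \<notin> P"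
        and sep: "\<forall>B\<in>P. \<forall>i\<in>R. \<forall>j\<in>R. i \<in> B \<and> j \<in> B \<longrightarrow> i = j"
        using PX unfolding Part_def mem_Collect_eq by simp_all
      have finP: "finite P" using finite_elements[OF _ Pp(1)] fA by simp
      obtain C where C: "C \<in> P" "a \<in> C" using partition_onD1[OF Pp(1)] by blast
      have uniq: "B = C" if "B \<in> P" "a \<in> B" for B using pblock_eq[OF Pp(1) that(1) C(1) that(2) C(2)] .
      have U0: "{B\<in>P. a \<in> B} = {C}" using uniq C by blast
      have U: "\<Union>{B\<in>P. a \<in> B} = C" unfolding U0 by simp
      have ne: "\<And>B. B \<in> P \<Longrightarrow> B \<noteq> {}" using partition_onD3[OF Pp(1)] by blast
      have Cne: "C - {a} \<noteq> {}"
      proof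
        assume "C - {a} = {}"
        then have "C = {a}" using C(2) by auto
        then show False using C(1) Pp(3) by simp
      qed
      have oth: "B - {a} = B" if "B \<in> P" "B \<noteq> C" for B using uniq that by blast
      have img: "(\<lambda>B. B - {a}) ` P = insert (C - {a}) (P - {C})"
      proof -
        have "(\<lambda>B. B - {a}) ` P = (\<lambda>B. B - {a}) ` (insert C (P - {C}))" by (simp only: insert_Diff[OF C(1)])
        also have "\<dots> = insert (C - {a}) ((\<lambda>B. B - {a}) ` (P - {C}))" by (simp only: image_insert)
        also have "(\<lambda>B. B - {a}) ` (P - {C}) = (\<lambda>B. B) ` (P - {C})"
          by (rule image_cong[OF refl]) (use oth in simp)
        also have "(\<lambda>B. B) ` (P - {C}) = P - {C}" by simp
        finally show ?thesis .
      qed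
      have notin: "C - {a} \<notin> P - {C}"
      proof
        assume "C - {a} \<in> P - {C}"
        then obtain x where "x \<in> C - {a}" "C - {a} \<in> P" "C - {a} \<noteq> C" using Cne by blast
        then show False using pblock_eq[OF Pp(1), of "C - {a}" C x] C by blast
      qed
      have GF0: "G (F P) = insert (insert a (C - {a})) (insert (C - {a}) (P - {C}) - {C - {a}})"
        unfolding G_def F_def img U by (simp only: fst_conv snd_conv)
      have GF1: "insert a (C - {a}) = C" using C(2) by blast
      have GF2: "insert (C - {a}) (P - {C}) - {C - {a}} = P - {C}" using notin by (rule Diff_insert_absorb)
      have GF: "G (F P) = P" unfolding GF0 GF1 GF2 using C(1) by (rule insert_Diff)
      have inj: "inj_on (\<lambda>B. B - {a}) P"
      proof (rule inj_onI)
        fix B B' assume BB: "B \<in> P" "B' \<in> P" "B - {a} = B' - {a}"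
        show "B = B'"
        proof (rule ccontr)
          assume "B \<noteq> B'"
          have "B - {a} \<noteq> {}" using BB(1) ne Pp(3) by (metis Diff_eq_empty_iff subset_singletonD)
          then obtain x where "x \<in> B" "x \<in> B'" using BB(3) by blast
          then show False using pblock_eq[OF Pp(1) BB(1,2)] \<open>B \<noteq> B'\<close> by blast
        qed
      qed
      have part: "partition_on A ((\<lambda>B. B - {a}) ` P)"
      proof (rule partition_onI)
        show "\<Union>((\<lambda>B. B - {a}) ` P) = A" using partition_onD1[OF Pp(1)] aA by blast
        show "disjnt p q" if pq: "p \<in> (\<lambda>B. B - {a}) ` P" "q \<in> (\<lambda>B. B - {a}) ` P" "p \<noteq> q" for p q
        proof -
          obtain B B' where "B \<in> P" "B' \<in> P" "p = B - {a}" "q = B' - {a}" using pq(1,2) by blast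
          then show ?thesis using pq(3) pblock_eq[OF Pp(1), of B B'] by (auto simp: disjnt_def)
        qed
        show "{} \<notin> (\<lambda>B. B - {a}) ` P"
        proof
          assume "{} \<in> (\<lambda>B. B - {a}) ` P"
          then obtain B where "B \<in> P" "B - {a} = {}" by auto
          then show False using ne Pp(3) by (metis Diff_eq_empty_iff subset_singletonD)
        qed
      qed
      have cardI: "card ((\<lambda>B. B - {a}) ` P) = Suc j" using card_image[OF inj] Pp(2) by simp
      have sepI: "\<forall>B\<in>(\<lambda>B. B - {a}) ` P. \<forall>i\<in>R. \<forall>j\<in>R. i \<in> B \<and> j \<in> B \<longrightarrow> i = j"
        using sep by blast
      have "F P \<in> Sigma ?Y id"
        unfolding F_def U using part cardI sepI img unfolding Part_def by auto
      with GF show ?thesis by blast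
    qed
    have Qfacts: "F (G QB) = QB \<and> G QB \<in> X2" if QB: "QB \<in> Sigma ?Y id" for QB
    proof -
      obtain Q B where QB': "QB = (Q, B)" by (cases QB)
      have Qp: "partition_on A Q" "card Q = Suc j" and BQ: "B \<in> Q"
        and sep: "\<forall>B\<in>Q. \<forall>i\<in>R. \<forall>j\<in>R. i \<in> B \<and> j \<in> B \<longrightarrow> i = j"
        using QB unfolding QB' Part_def mem_Sigma_iff mem_Collect_eq id_def by simp_all
      have finQ: "finite Q" using finite_elements[OF fA Qp(1)] .
      have na: "a \<notin> D" if "D \<in> Q" for D using that partition_onD1[OF Qp(1)] aA by blast
      have ne: "\<And>D. D \<in> Q \<Longrightarrow> D \<noteq> {}" using partition_onD3[OF Qp(1)] by blast
      have GQ: "G QB = insert (insert a B) (Q - {B})" unfolding G_def QB' by simp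
      have notin: "insert a B \<notin> Q - {B}" using na by blast
      have img: "(\<lambda>D. D - {a}) ` (G QB) = Q"
      proof -
        have "(\<lambda>D. D - {a}) ` (G QB) = insert B ((\<lambda>D. D - {a}) ` (Q - {B}))"
          unfolding GQ using na BQ by auto
        also have "(\<lambda>D. D - {a}) ` (Q - {B}) = Q - {B}"
          using na by (auto simp: image_iff)
        finally show ?thesis using BQ by auto
      qed
      have U: "\<Union>{D\<in>G QB. a \<in> D} = insert a B" unfolding GQ using na by auto
      have FG0: "F (G QB) = (Q, insert a B - {a})" unfolding F_def img U by (simp only:)
      have FG1: "F (G QB) = (Q, B)" unfolding FG0 using na BQ by auto
      have FG: "F (G QB) = QB" using FG1 QB' by simp
      have part: "partition_on (insert a A) (G QB)"
      proof (rule partition_onI)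
        show "\<Union>(G QB) = insert a A" unfolding GQ using partition_onD1[OF Qp(1)] BQ by auto
        show "disjnt p q" if "p \<in> G QB" "q \<in> G QB" "p \<noteq> q" for p q
        proof -
          have dq: "disjnt D D'" if "D \<in> Q" "D' \<in> Q" "D \<noteq> D'" for D D'
            using pblock_eq[OF Qp(1) that(1,2)] that(3) by (auto simp: disjnt_def)
          show ?thesis using that dq[of B] dq na BQ unfolding GQ
            by (auto simp: disjnt_def)
        qed
        show "{} \<notin> G QB" unfolding GQ using ne by auto
      qed
      have cardG: "card (G QB) = Suc j" unfolding GQ using notin finQ Qp(2) BQ
        by (simp add: card_Diff_singleton)
      have single: "{a} \<notin> G QB" unfolding GQ using na ne BQ by auto
      have sepG: "\<forall>D\<in>G QB. \<forall>i\<in>R. \<forall>j\<in>R. i \<in> D \<and> j \<in> D \<longrightarrow> i = j"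
        unfolding GQ using sep aR BQ by blast
      have "G QB \<in> X2" unfolding X2_def Part_def using part cardG single sepG by blast
      with FG show ?thesis by blast
    qed
    have "bij_betw F X2 (Sigma ?Y id)"
    proof (rule bij_betw_byWitness[where f'=G])
      show "\<forall>P\<in>X2. G (F P) = P" using Pfacts by blast
      show "\<forall>QB\<in>Sigma ?Y id. F (G QB) = QB" using Qfacts by blast
      show "F ` X2 \<subseteq> Sigma ?Y id" using Pfacts by blast
      show "G ` Sigma ?Y id \<subseteq> X2" using Qfacts by blast
    qed
    then have "card X2 = card (Sigma ?Y id)" by (rule bij_betw_same_card)
    also have "\<dots> = (\<Sum>Q\<in>?Y. card Q)"
    proof -
      have f1: "finite ?Y" using fA by (rule finite_Part)
      have f2: "\<forall>Q\<in>?Y. finite (id Q)" using fA finite_elements unfolding Part_def by auto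
      show ?thesis using card_SigmaI[OF f1 f2] unfolding id_def by simp
    qed
    also have "\<dots> = (\<Sum>Q\<in>?Y. Suc j)" by (rule sum.cong) (auto simp: Part_def)
    also have "\<dots> = Suc j * card ?Y" by simp
    finally show ?thesis .
  qed
  have "card ?X = card X1 + card X2"
    using split finX by (metis card_Un_disjoint finite_Un)
  then show ?thesis using c1 c2 by simp
qed



lemma rs_Part: "r_stirling r n k = card (Part {1..n+r} {1..r} (k+r))"
  unfolding r_stirling_def Part_def by simp

lemma rs_rec:
  assumes r: "r \<ge> 1"
  shows "r_stirling r (Suc n) k = (if k = 0 then 0 else r_stirling r n (k-1)) + (k+r) * r_stirling r n k"
proof -
  have ins: "{1..Suc n + r} = insert (Suc n + r) {1..n+r}" by auto
  have kr: "k + r = Suc (k + r - 1)" using r by simp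
  have "r_stirling r (Suc n) k = card (Part (insert (Suc n + r) {1..n+r}) {1..r} (Suc (k+r-1)))"
    unfolding rs_Part ins using kr by simp
  also have "\<dots> = card (Part {1..n+r} {1..r} (k+r-1)) + Suc (k+r-1) * card (Part {1..n+r} {1..r} (Suc (k+r-1)))"
    by (rule Part_rec) auto
  also have "\<dots> = card (Part {1..n+r} {1..r} (k+r-1)) + (k+r) * r_stirling r n k"
    unfolding rs_Part using kr by simp
  also have "card (Part {1..n+r} {1..r} (k+r-1)) = (if k = 0 then 0 else r_stirling r n (k-1))"
  proof (cases "k = 0")
    case True
    have "Part {1..n+r} {1..r} (k+r-1) = {}"
      by (rule Part_small) (use True r in auto)
    then show ?thesis using True by simp
  next
    case False
    then have "k + r - 1 = (k - 1) + r" by simp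
    then show ?thesis using False rs_Part by simp
  qed
  finally show ?thesis .
qed

lemma rs_big: "n < k \<Longrightarrow> r_stirling r n k = 0"
  unfolding rs_Part by (subst Part_big) auto

lemma a_rec: "(-1::int) ^ Suc p * int (derangement (Suc p)) + int (Suc p) * ((-1) ^ p * int (derangement p)) = 1"
  by (cases "even p") (simp_all add: der_rec algebra_simps)

theorem corollary1:
  fixes n r :: nat
  assumes "n \<ge> 1" and "r \<ge> 1"
  shows "(\<Sum>k=0..n. int (r_stirling r n k) * (-1) ^ (k + r - 1) * int (derangement (k + r - 1)))
         = int (r_bell (n - 1) r)"
proof -
  obtain m where n: "n = Suc m" using assms(1) by (cases n) auto
  define a where "a p = (-1::int)^p * int (derangement p)" for p
  define s where "s k = int (r_stirling r m k)" for k
  have arec: "a (k + r) + int (k + r) * a (k + r - 1) = 1" for k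
  proof -
    obtain p where p: "k + r = Suc p" using assms(2) by (metis add_is_0 not_one_le_zero not0_implies_Suc)
    show ?thesis unfolding a_def p using a_rec[of p] by simp
  qed
  have "(\<Sum>k=0..n. int (r_stirling r n k) * (-1) ^ (k + r - 1) * int (derangement (k + r - 1)))
      = (\<Sum>k=0..Suc m. ((if k = 0 then 0 else s (k-1)) + int (k+r) * s k) * a (k + r - 1))"
    unfolding n a_def s_def rs_rec[OF assms(2)] by (intro sum.cong refl) (auto simp: mult.assoc)
  also have "\<dots> = (\<Sum>k=0..Suc m. (if k = 0 then 0 else s (k-1)) * a (k + r - 1))
                 + (\<Sum>k=0..Suc m. int (k+r) * s k * a (k + r - 1))"
    by (simp add: distrib_right sum.distrib)
  also have "(\<Sum>k=0..Suc m. (if k = 0 then 0 else s (k-1)) * a (k + r - 1)) = (\<Sum>k=0..m. s k * a (k + r))"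
    by (subst sum.atLeast0_atMost_Suc_shift) simp
  also have "(\<Sum>k=0..Suc m. int (k+r) * s k * a (k + r - 1)) = (\<Sum>k=0..m. int (k+r) * s k * a (k + r - 1))"
    by (simp add: s_def rs_big)
  also have "(\<Sum>k=0..m. s k * a (k + r)) + (\<Sum>k=0..m. int (k+r) * s k * a (k + r - 1))
      = (\<Sum>k=0..m. s k * (a (k + r) + int (k + r) * a (k + r - 1)))"
    by (simp add: sum.distrib[symmetric] algebra_simps)
  also have "\<dots> = (\<Sum>k=0..m. s k)" using arec by simp
  also have "\<dots> = int (r_bell (n - 1) r)"
    unfolding r_bell_def n s_def by (simp add: atLeast0AtMost)
  finally show ?thesis .
qed


end
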